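(* Let $\mathbb{K}$ be a field of characteristic $0$. For a positive integer $r$, let $\mu(r)$ be the least integer $h$ such that $(1,r,h,r,1)$ is the Hilbert function of a standard graded Artinian Gorenstein $\mathbb{K}$-algebra, and let $\delta(r)=r-\mu(r)$. Then for every integer $m\geq 3$, \[\delta\!\left(m+\binom{m+2}{3}\right)\geq\binom{m}{3}.\]
   Context: Standard graded Artinian Gorenstein algebras $Q/I$ are taken with $I$ containing no linear forms, so the codimension equals $h_1$. *)

theory Defs
  imports Main "HOL.Vector_Spaces" "HOL-Library.Poly_Mapping"
begin

text \<open>Polynomials over a field 'k in the variables x_0, x_1, ... :
  finitely supported maps from monomials (exponent vectors nat \<Rightarrow>0 nat) to coefficients.
  The standard graded polynomial ring Q = k[x_0,...,x_{n-1}] is the subset poly_ring n.\<close>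

type_synonym 'k mpol = "(nat \<Rightarrow>\<^sub>0 nat) \<Rightarrow>\<^sub>0 'k"

definition mdeg :: "(nat \<Rightarrow>\<^sub>0 nat) \<Rightarrow> nat" where
  "mdeg m = (\<Sum>j\<in>Poly_Mapping.keys m. Poly_Mapping.lookup m j)"

definition var :: "nat \<Rightarrow> 'k::field mpol" where
  "var j = Poly_Mapping.single (Poly_Mapping.single j 1) 1"

definition const :: "'k::field \<Rightarrow> 'k mpol" where
  "const c = Poly_Mapping.single 0 c"

definition smul :: "'k::field \<Rightarrow> 'k mpol \<Rightarrow> 'k mpol" where
  "smul c p = const c * p"

definition kdim :: "'k::field mpol set \<Rightarrow> nat" where
  "kdim V = vector_space.dim (smul :: 'k \<Rightarrow> 'k mpol \<Rightarrow> 'k mpol) V"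

definition poly_ring :: "nat \<Rightarrow> 'k::field mpol set" where
  "poly_ring n = {p. \<forall>m\<in>Poly_Mapping.keys p. Poly_Mapping.keys m \<subseteq> {..<n}}"

definition hom_part :: "nat \<Rightarrow> nat \<Rightarrow> 'k::field mpol set" where
  "hom_part n d = {p \<in> poly_ring n. \<forall>m\<in>Poly_Mapping.keys p. mdeg m = d}"

definition hcomp :: "nat \<Rightarrow> 'k::field mpol \<Rightarrow> 'k mpol" where
  "hcomp d p = Abs_poly_mapping (\<lambda>m. if mdeg m = d then Poly_Mapping.lookup p m else 0)"

definition is_ideal :: "nat \<Rightarrow> 'k::field mpol set \<Rightarrow> bool" where
  "is_ideal n I \<longleftrightarrow> I \<subseteq> poly_ring n \<and> 0 \<in> I \<and>
     (\<forall>p\<in>I. \<forall>q\<in>I. p + q \<in> I) \<and> (\<forall>p\<in>I. \<forall>q\<in>poly_ring n. q * p \<in> I)"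

definition is_homogeneous_ideal :: "nat \<Rightarrow> 'k::field mpol set \<Rightarrow> bool" where
  "is_homogeneous_ideal n I \<longleftrightarrow> is_ideal n I \<and> (\<forall>p\<in>I. \<forall>d. hcomp d p \<in> I)"

text \<open>Hilbert function of Q/I: h(d) = dim_k Q_d - dim_k (I \<inter> Q_d) = dim_k (Q/I)_d.\<close>
definition hilb :: "nat \<Rightarrow> 'k::field mpol set \<Rightarrow> nat \<Rightarrow> nat" where
  "hilb n I d = kdim (hom_part n d :: 'k mpol set) - kdim (I \<inter> hom_part n d)"

definition artinian :: "nat \<Rightarrow> 'k::field mpol set \<Rightarrow> bool" where
  "artinian n I \<longleftrightarrow> (\<exists>D. \<forall>d\<ge>D. hom_part n d \<subseteq> I)"

text \<open>Degree-d part of the socle (0 :_{Q/I} m), lifted to Q: elements f of Q_d with x_j f \<in> I for all j.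
  Its image in (Q/I)_d has dimension kdim(socle_lift n I d) - kdim(I \<inter> Q_d).\<close>
definition socle_lift :: "nat \<Rightarrow> 'k::field mpol set \<Rightarrow> nat \<Rightarrow> 'k mpol set" where
  "socle_lift n I d = {f \<in> hom_part n d. \<forall>j<n. var j * f \<in> I}"

text \<open>Standard graded Artinian Gorenstein algebra Q/I (I homogeneous, proper): Artinian and the
  (graded) socle of Q/I is one-dimensional; since the socle of Q/I is graded and vanishes in
  degrees where (Q/I)_d = 0, its dimension is the finite sum over d < D below.\<close>
definition graded_AG :: "nat \<Rightarrow> 'k::field mpol set \<Rightarrow> bool" where
  "graded_AG n I \<longleftrightarrow> is_homogeneous_ideal n I \<and> const 1 \<notin> I \<and>
     (\<exists>D. (\<forall>d\<ge>D. hom_part n d \<subseteq> I) \<and>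
          (\<Sum>d<D. kdim (socle_lift n I d) - kdim (I \<inter> hom_part n d)) = 1)"

text \<open>(1,r,h,r,1) is the Hilbert function of a standard graded Artinian Gorenstein k-algebra Q/I,
  Q = k[x_0..x_{r-1}] (I has no linear forms, so the codimension is h_1 = r).\<close>
definition AG_hilb_realizable :: "'k::field itself \<Rightarrow> nat \<Rightarrow> nat \<Rightarrow> bool" where
  "AG_hilb_realizable _ r h \<longleftrightarrow> (\<exists>I :: 'k mpol set. graded_AG r I \<and>
     hilb r I 0 = 1 \<and> hilb r I 1 = r \<and> hilb r I 2 = h \<and> hilb r I 3 = r \<and> hilb r I 4 = 1 \<and>
     (\<forall>d>4. hilb r I d = 0))"

definition mu :: "'k::field itself \<Rightarrow> nat \<Rightarrow> nat" where
  "mu K r = (LEAST h. AG_hilb_realizable K r h)"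

definition delta :: "'k::field itself \<Rightarrow> nat \<Rightarrow> int" where
  "delta K r = int r - int (mu K r)"

end

theory Submission
  imports Defs
begin

abbreviation (input) lk where "lk \<equiv> Poly_Mapping.lookup"
abbreviation (input) ks where "ks \<equiv> Poly_Mapping.keys"
abbreviation (input) sg where "sg \<equiv> Poly_Mapping.single"

lemma lookup_single_mult:
  fixes p :: "'k::field mpol"
  shows "lk (sg c v * p) s = (if \<exists>b. s = c + b then v * lk p (s - c) else 0)"
proof -
  have "lk (sg c v * p) s = (\<Sum>l. (if c = l then v * (\<Sum>q. lk p q when s = l + q) else 0))"
    unfolding lookup_mult lookup_single by (intro Sum_any.cong) (simp add: when_def)
  also have "\<dots> = v * (\<Sum>q. lk p q when s = c + q)" by simp
  also have "(\<Sum>q. lk p q when s = c + q) = (if \<exists>b. s = c + b then lk p (s - c) else 0)"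
  proof (cases "\<exists>b. s = c + b")
    case True
    then obtain b where b: "s = c + b" by blast
    have "(\<Sum>q. lk p q when s = c + q) = (\<Sum>q. if q = b then lk p q else 0)"
      by (intro Sum_any.cong) (auto simp: when_def b)
    then show ?thesis using b by simp
  next
    case False
    then show ?thesis by (simp add: when_def)
  qed
  finally show ?thesis by simp
qed

lemma lookup_smul: "lk (smul c p) k = c * lk p k"
  unfolding smul_def const_def by (simp add: lookup_single_mult)

lemma smul_vs: "vector_space (smul :: 'k::field \<Rightarrow> 'k mpol \<Rightarrow> 'k mpol)"
  by unfold_locales (auto intro!: poly_mapping_eqI simp: lookup_smul lookup_add algebra_simps)


section \<open>Monomial degree\<close>

lemma mdeg_add: "mdeg (a + b) = mdeg a + mdeg b"
  unfolding mdeg_def by (rule setsum_keys_plus_distrib[where f="\<lambda>k x. x"]) auto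

lemma mdeg_single[simp]: "mdeg (sg i k) = k"
  unfolding mdeg_def by (cases "k = 0") auto

lemma mdeg_zero[simp]: "mdeg 0 = 0"
  unfolding mdeg_def by simp

lemma mdeg_eq_0: "mdeg a = 0 \<longleftrightarrow> a = 0"
proof
  assume "mdeg a = 0"
  then have "\<forall>j\<in>ks a. lk a j = 0" unfolding mdeg_def by simp
  then show "a = 0" by (metis in_keys_iff keys_eq_empty equals0I)
qed simp

lemma lookup_le_mdeg: "lk a j \<le> mdeg a"
proof (cases "j \<in> ks a")
  case True
  then show ?thesis unfolding mdeg_def
    by (metis finite_keys member_le_sum zero_le)
qed (simp add: in_keys_iff)

lemma mdeg_Suc:
  assumes "mdeg a = Suc n"
  obtains i b where "i \<in> ks a" "a = sg i 1 + b" "mdeg b = n"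
proof -
  have "a \<noteq> 0" using assms by auto
  then obtain i where i: "i \<in> ks a" by (metis keys_eq_empty equals0I)
  then have "lk a i \<ge> 1" by (simp add: in_keys_iff)
  define b where "b = a - sg i 1"
  have ab: "a = sg i 1 + b"
    by (rule poly_mapping_eqI) (use \<open>lk a i \<ge> 1\<close> in \<open>auto simp: b_def lookup_add lookup_minus lookup_single when_def\<close>)
  then have "mdeg b = n" using assms mdeg_add[of "sg i 1" b] by simp
  then show ?thesis using that i ab by blast
qed

definition mons :: "nat \<Rightarrow> nat \<Rightarrow> (nat \<Rightarrow>\<^sub>0 nat) set" where
  "mons d n = {a. mdeg a = d \<and> ks a \<subseteq> {..<n}}"

lemma keys_add_nat: "ks (a + b :: nat \<Rightarrow>\<^sub>0 nat) = ks a \<union> ks b"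
  by (auto simp: in_keys_iff lookup_add)

lemma finite_monos: "finite (mons d n)"
proof (induction d)
  case 0
  have "mons 0 n \<subseteq> {0}" by (auto simp: mons_def mdeg_eq_0)
  then show ?case using finite_subset by blast
next
  case (Suc d)
  have "mons (Suc d) n \<subseteq> (\<lambda>(i, b). sg i 1 + b) ` ({..<n} \<times> mons d n)"
  proof
    fix a assume "a \<in> mons (Suc d) n"
    then have a: "mdeg a = Suc d" "ks a \<subseteq> {..<n}" by (auto simp: mons_def)
    obtain i b where "i \<in> ks a" "a = sg i 1 + b" "mdeg b = d" using mdeg_Suc[OF a(1)] .
    then show "a \<in> (\<lambda>(i, b). sg i 1 + b) ` ({..<n} \<times> mons d n)"
      using a(2) by (auto simp: mons_def keys_add_nat intro!: image_eqI[of _ _ "(i,b)"])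
  qed
  then show ?case using Suc finite_subset by blast
qed

lemma poly_decomp: "p = (\<Sum>c\<in>ks p. sg c (lk p c))"
proof (rule poly_mapping_eqI)
  fix k
  show "lk p k = lk (\<Sum>c\<in>ks p. sg c (lk p c)) k"
    by (cases "k \<in> ks p") (auto simp: lookup_sum lookup_single when_def in_keys_iff)
qed

lemma smul_single: "smul c (sg a (1::'k::field)) = sg a c"
  by (rule poly_mapping_eqI) (simp add: lookup_smul lookup_single when_def)

lemma keys_mult_sub: "ks (p * q :: 'k::field mpol) \<subseteq> {a + b |a b. a \<in> ks p \<and> b \<in> ks q}"
  by (rule keys_mult)

lemma poly_ring_mult: "p \<in> poly_ring n \<Longrightarrow> q \<in> poly_ring n \<Longrightarrow> p * q \<in> poly_ring n"
  unfolding poly_ring_def using keys_mult_sub[of p q] by (force simp: keys_add_nat)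

lemma poly_ring_add: "p \<in> poly_ring n \<Longrightarrow> q \<in> poly_ring n \<Longrightarrow> p + q \<in> poly_ring n"
  unfolding poly_ring_def using keys_add[of p q] by blast

lemma lookup_hcomp: "lk (hcomp d p) m = (if mdeg m = d then lk p m else 0)"
proof -
  have "finite {m. (if mdeg m = d then lk p m else 0) \<noteq> 0}"
    by (rule finite_subset[of _ "ks p"]) (auto simp: in_keys_iff)
  then show ?thesis unfolding hcomp_def by simp
qed

lemma keys_hcomp: "ks (hcomp d p) \<subseteq> ks p"
  by (auto simp: in_keys_iff lookup_hcomp split: if_splits)


context vector_space begin

lemma card_le_dim_gen:
  assumes "independent B" "B \<subseteq> V" "V \<subseteq> span W" "finite W"
  shows "card B \<le> dim V"
proof -
  obtain B' where B': "B \<subseteq> B'" "B' \<subseteq> V" "independent B'" "V \<subseteq> span B'"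
    using maximal_independent_subset_extend[OF assms(2,1)] by blast
  have "finite B'" using independent_span_bound[OF assms(4) B'(3)] B'(2) assms(3) by auto
  then have "card B \<le> card B'" using B'(1) card_mono by blast
  also have "card B' = dim V" using basis_card_eq_dim B' by blast
  finally show ?thesis .
qed

lemma rank_nullity_gen:
  assumes V: "subspace V" and VW: "V \<subseteq> span W" and fW: "finite W" and lf: "Vector_Spaces.linear scale scale f"
  shows "dim V = dim {v\<in>V. f v = 0} + dim (f ` V)"
proof -
  interpret lf: linear scale scale f by fact
  let ?K = "{v\<in>V. f v = 0}"
  obtain BK where BK: "BK \<subseteq> ?K" "independent BK" "?K \<subseteq> span BK" "card BK = dim ?K"
    by (rule basis_exists)
  obtain B where B: "BK \<subseteq> B" "B \<subseteq> V" "independent B" "V \<subseteq> span B"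
    using maximal_independent_subset_extend[of BK V] BK(1,2) by blast
  have finB: "finite B" using independent_span_bound[OF fW B(3)] B(2) VW by auto
  have dimV: "card B = dim V" using basis_card_eq_dim B by blast
  define C where "C = B - BK"
  have spanBV: "span B \<subseteq> V" using span_minimal[OF B(2) V] .
  have iC: "independent C" using B(3) C_def dependent_mono by blast
  have zero: "x = 0" if x: "x \<in> span C" "f x = 0" for x
  proof -
    have "span C \<subseteq> span B" using C_def span_mono by blast
    then have "x \<in> ?K" using x spanBV by auto
    then have xBK: "x \<in> span BK" using BK(3) by blast
    have r1: "representation B x = representation BK x"
      by (rule representation_extend[OF B(3) xBK B(1)])
    have r2: "representation B x = representation C x"
      by (rule representation_extend[OF B(3) x(1)]) (auto simp: C_def)
    have "representation BK x b = 0" for b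
    proof (rule ccontr)
      assume ne: "representation BK x b \<noteq> 0"
      then have "b \<in> BK" using representation_ne_zero by blast
      moreover have "representation C x b \<noteq> 0" using ne r1 r2 by simp
      then have "b \<in> C" using representation_ne_zero by blast
      ultimately show False by (auto simp: C_def)
    qed
    then show "x = 0"
      using sum_nonzero_representation_eq[OF BK(2) xBK] by simp
  qed
  have injC: "inj_on f (span C)"
  proof (rule inj_onI)
    fix x y assume "x \<in> span C" "y \<in> span C" "f x = f y"
    then have "x - y \<in> span C" "f (x - y) = 0" by (auto simp: span_diff lf.diff)
    then show "x = y" using zero[of "x - y"] by simp
  qed
  have ifC: "independent (f ` C)" by (rule lf.independent_injective_image[OF iC injC])
  have injC': "inj_on f C" using injC span_superset inj_on_subset by blast
  have fCV: "f ` C \<subseteq> f ` V" using B(2) C_def by auto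
  have VfC: "f ` V \<subseteq> span (f ` C)"
  proof
    fix y assume "y \<in> f ` V"
    then obtain v where v: "v \<in> V" "y = f v" by blast
    then have "y \<in> f ` span B" using B(4) by blast
    then have "y \<in> span (f ` B)" using lf.span_image by blast
    moreover have "f ` B \<subseteq> insert 0 (f ` C)" using BK(1) by (auto simp: C_def)
    ultimately show "y \<in> span (f ` C)"
      using span_mono[of "f ` B" "insert 0 (f ` C)"] span_insert_0 by blast
  qed
  have "card (f ` C) = dim (f ` V)" using basis_card_eq_dim[OF fCV VfC ifC] .
  moreover have "card (f ` C) = card C" using card_image[OF injC'] .
  moreover have "card C = card B - card BK" unfolding C_def
    using card_Diff_subset[of BK B] B(1) finB finite_subset by blast
  moreover have "card BK \<le> card B" using card_mono[OF finB B(1)] .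
  ultimately show ?thesis using dimV BK(4) by simp
qed

end


interpretation vs: vector_space "smul :: 'k::field \<Rightarrow> 'k mpol \<Rightarrow> 'k mpol"
  by (rule smul_vs)

lemma kdim_eq: "kdim V = vs.dim V"
  unfolding kdim_def ..

definition Lf :: "(nat \<Rightarrow>\<^sub>0 nat) set \<Rightarrow> 'k::field mpol \<Rightarrow> 'k" where
  "Lf S p = (\<Sum>s\<in>S. lk p s)"

definition apo :: "nat \<Rightarrow> (nat \<Rightarrow>\<^sub>0 nat) set \<Rightarrow> 'k::field mpol set" where
  "apo n S = {p \<in> poly_ring n. \<forall>q. Lf S (q * p) = 0}"

definition phi :: "(nat \<Rightarrow>\<^sub>0 nat) set \<Rightarrow> 'k::field mpol \<Rightarrow> 'k mpol" where
  "phi S p = Abs_poly_mapping (\<lambda>c. Lf S (sg c 1 * p))"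

lemma Lf_single_mult:
  "Lf S (sg c v * p) = (\<Sum>s\<in>S. if \<exists>b. s = c + b then v * lk p (s - c) else 0)"
  unfolding Lf_def by (simp add: lookup_single_mult)

lemma Lf_add: "Lf S (p + q) = Lf S p + Lf S q"
  unfolding Lf_def by (simp add: lookup_add sum.distrib)

lemma Lf_sum: "Lf S (sum f A) = (\<Sum>a\<in>A. Lf S (f a))"
  unfolding Lf_def by (simp add: lookup_sum sum.swap[of _ S])

lemma Lf_zero[simp]: "Lf S 0 = 0"
  unfolding Lf_def by simp

lemma Lf_single_mult_scale: "Lf S (sg c v * p) = v * Lf S (sg c 1 * p)"
  unfolding Lf_single_mult by (simp add: sum_distrib_left if_distrib cong: if_cong)

lemma Lf_mult: "Lf S (q * p) = (\<Sum>c\<in>ks q. lk q c * Lf S (sg c 1 * p))"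
proof -
  have "q * p = (\<Sum>c\<in>ks q. sg c (lk q c)) * p"
    by (rule arg_cong[where f="\<lambda>x. x * p"]) (rule poly_decomp)
  also have "\<dots> = (\<Sum>c\<in>ks q. sg c (lk q c) * p)"
    by (rule sum_distrib_right)
  finally have "q * p = (\<Sum>c\<in>ks q. sg c (lk q c) * p)" .
  then have "Lf S (q * p) = (\<Sum>c\<in>ks q. Lf S (sg c (lk q c) * p))" by (simp only: Lf_sum)
  also have "\<dots> = (\<Sum>c\<in>ks q. lk q c * Lf S (sg c 1 * p))"
    by (rule sum.cong[OF refl]) (rule Lf_single_mult_scale)
  finally show ?thesis .
qed

lemma Lf_mult_zero: "(\<And>c. Lf S (sg c 1 * p) = 0) \<Longrightarrow> Lf S (q * p) = 0"
  by (subst Lf_mult) simp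

lemma finite_supp_phi:
  assumes "finite S"
  shows "finite {c. Lf S (sg c 1 * (p::'k::field mpol)) \<noteq> 0}"
proof (rule finite_subset)
  show "{c. Lf S (sg c 1 * p) \<noteq> 0} \<subseteq> (\<lambda>(s, b). s - b) ` (S \<times> ks p)"
  proof
    fix c assume "c \<in> {c. Lf S (sg c 1 * p) \<noteq> 0}"
    then have "(\<Sum>s\<in>S. if \<exists>b. s = c + b then lk p (s - c) else 0) \<noteq> 0"
      by (simp add: Lf_single_mult cong: if_cong)
    then obtain s where s: "s \<in> S" "(if \<exists>b. s = c + b then lk p (s - c) else 0) \<noteq> 0"
      by (rule sum.not_neutral_contains_not_neutral)
    then obtain b where b: "s = c + b" "lk p b \<noteq> 0" by (auto split: if_splits)
    then show "c \<in> (\<lambda>(s, b). s - b) ` (S \<times> ks p)"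
      using s(1) by (auto simp: in_keys_iff intro!: image_eqI[of _ _ "(s,b)"])
  qed
  show "finite ((\<lambda>(s, b). s - b) ` (S \<times> ks p))" using assms by simp
qed

lemma lookup_phi: assumes "finite S" shows "lk (phi S p) c = Lf S (sg c 1 * p)"
  unfolding phi_def by (simp add: lookup_Abs_poly_mapping[OF finite_supp_phi[OF assms]])

lemma linear_phi:
  assumes "finite S"
  shows "Vector_Spaces.linear smul smul (phi S :: 'k::field mpol \<Rightarrow> 'k mpol)"
proof -
  have "phi S (p + q) = phi S p + phi S q" for p q :: "'k mpol"
    by (rule poly_mapping_eqI) (simp add: lookup_phi[OF assms] lookup_add distrib_left Lf_add)
  moreover have "phi S (smul k p) = smul k (phi S p)" for k and p :: "'k mpol"
  proof (rule poly_mapping_eqI)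
    fix c
    have "sg c 1 * smul k p = sg c k * p"
      unfolding smul_def const_def by (simp add: mult.assoc[symmetric] mult_single)
    then show "lk (phi S (smul k p)) c = lk (smul k (phi S p)) c"
      by (simp add: lookup_phi[OF assms] lookup_smul Lf_single_mult_scale[of S c k])
  qed
  ultimately show ?thesis
    unfolding linear_iff using smul_vs by blast
qed

lemma phi_eq_0_iff: "finite S \<Longrightarrow> phi S p = 0 \<longleftrightarrow> (\<forall>c. Lf S (sg c 1 * p) = 0)"
  by (auto simp: lookup_phi poly_mapping_eq_iff fun_eq_iff)

lemma apo_iff: "p \<in> apo n S \<longleftrightarrow> p \<in> poly_ring n \<and> (\<forall>c. Lf S (sg c 1 * p) = 0)"
  unfolding apo_def using Lf_mult_zero by blast

lemma Lf_mono: "finite S \<Longrightarrow> Lf S (sg a (1::'k::field)) = (if a \<in> S then 1 else 0)"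
  unfolding Lf_def by (simp add: lookup_single when_def sum.delta sum.delta')

lemma lookup_phi_mono:
  "finite S \<Longrightarrow> lk (phi S (sg a (1::'k::field))) c = (if a + c \<in> S then 1 else 0)"
  by (simp add: lookup_phi mult_single Lf_mono add.commute)

lemma subspace_hom_part: "vs.subspace (hom_part n d)"
  unfolding vs.subspace_def
proof (intro conjI ballI allI)
  show "0 \<in> hom_part n d" by (simp add: hom_part_def poly_ring_def)
  fix x y :: "'k::field mpol" and c
  assume x: "x \<in> hom_part n d"
  have "ks (smul c x) \<subseteq> ks x" by (auto simp: in_keys_iff lookup_smul)
  then show "smul c x \<in> hom_part n d" using x by (auto simp: hom_part_def poly_ring_def)
  assume y: "y \<in> hom_part n d"
  show "x + y \<in> hom_part n d" using x y keys_add[of x y] unfolding hom_part_def poly_ring_def mem_Collect_eq by blast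
qed

lemma hom_part_span: "hom_part n d \<subseteq> vs.span ((\<lambda>a. sg a 1) ` mons d n)"
proof
  fix p :: "'k::field mpol" assume p: "p \<in> hom_part n d"
  have "p = (\<Sum>c\<in>ks p. smul (lk p c) (sg c 1))"
    by (subst poly_decomp[of p]) (simp add: smul_single)
  also have "\<dots> \<in> vs.span ((\<lambda>a. sg a 1) ` mons d n)"
    using p by (intro vs.span_sum vs.span_scale vs.span_base)
      (auto simp: hom_part_def poly_ring_def mons_def)
  finally show "p \<in> vs.span ((\<lambda>a. sg a 1) ` mons d n)" .
qed


lemma split_key:
  assumes "j \<in> ks (c :: nat \<Rightarrow>\<^sub>0 nat)"
  shows "c = sg j 1 + (c - sg j 1)"
proof -
  have "lk c j \<ge> 1" using assms by (simp add: in_keys_iff)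
  then show ?thesis
    by (intro poly_mapping_eqI) (auto simp: lookup_add lookup_minus lookup_single when_def)
qed

lemma Lf_nonzero_E:
  assumes "Lf S (sg c 1 * z) \<noteq> 0"
  obtains s b where "s \<in> S" "s = c + b" "b \<in> ks z"
proof -
  have "(\<Sum>s\<in>S. if \<exists>b. s = c + b then lk z (s - c) else 0) \<noteq> 0"
    using assms by (simp add: Lf_single_mult cong: if_cong)
  then obtain s where s: "s \<in> S" "(if \<exists>b. s = c + b then lk z (s - c) else 0) \<noteq> 0"
    by (rule sum.not_neutral_contains_not_neutral)
  then obtain b where "s = c + b" "lk z b \<noteq> 0" by (auto split: if_splits)
  then show ?thesis using that s(1) by (auto simp: in_keys_iff)
qed

lemma var_poly_ring: "j < n \<Longrightarrow> (var j :: 'k::field mpol) \<in> poly_ring n"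
  unfolding var_def poly_ring_def by simp

lemma var_mult_hom:
  assumes "j < n" "f \<in> hom_part n d"
  shows "(var j :: 'k::field mpol) * f \<in> hom_part n (Suc d)"
proof -
  have "var j * f \<in> poly_ring n" using poly_ring_mult var_poly_ring assms hom_part_def by blast
  moreover have "mdeg m = Suc d" if mk: "m \<in> ks (var j * f)" for m
  proof -
    obtain a b where "m = a + b" "a \<in> ks (var j :: 'k mpol)" "b \<in> ks f"
      using keys_mult_sub[of "var j" f] mk by blast
    then show ?thesis using assms(2) by (auto simp: var_def hom_part_def mdeg_add)
  qed
  ultimately show ?thesis by (auto simp: hom_part_def)
qed

locale apolar =
  fixes n :: nat and S :: "(nat \<Rightarrow>\<^sub>0 nat) set"
  assumes finS: "finite S" and S4: "\<And>s. s \<in> S \<Longrightarrow> mdeg s = 4"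
    and Sn: "\<And>s. s \<in> S \<Longrightarrow> ks s \<subseteq> {..<n}" and Sne: "S \<noteq> {}"
begin

lemma Lf_hcomp: "Lf S (sg c 1 * hcomp d p) = (if mdeg c + d = 4 then Lf S (sg c 1 * p) else 0)"
proof -
  have *: "(if \<exists>b. s = c + b then lk (hcomp d p) (s - c) else 0) =
    (if mdeg c + d = 4 then (if \<exists>b. s = c + b then lk p (s - c) else 0) else 0)" if "s \<in> S" for s
  proof (cases "\<exists>b. s = c + b")
    case True
    then obtain b where b: "s = c + b" by blast
    then have "mdeg (s - c) = 4 - mdeg c" "mdeg c \<le> 4" using S4[OF that] by (auto simp: mdeg_add)
    then show ?thesis using True by (auto simp: lookup_hcomp)
  qed simp
  show ?thesis
    unfolding Lf_single_mult using * by (auto cong: if_cong intro: sum.cong)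
qed

lemma ideal: "is_homogeneous_ideal n (apo n S :: 'k::field mpol set)"
  unfolding is_homogeneous_ideal_def is_ideal_def
proof (intro conjI ballI allI)
  show "apo n S \<subseteq> (poly_ring n :: 'k mpol set)" by (auto simp: apo_def)
  show "0 \<in> (apo n S :: 'k mpol set)" by (simp add: apo_def poly_ring_def)
  fix p :: "'k mpol" assume p: "p \<in> apo n S"
  {
    fix q :: "'k mpol" assume q: "q \<in> apo n S"
    show "p + q \<in> apo n S" using p q
      by (auto simp: apo_def poly_ring_add distrib_left Lf_add)
  next
    fix q :: "'k mpol" assume q: "q \<in> poly_ring n"
    show "q * p \<in> apo n S" using p q
      by (auto simp: apo_def poly_ring_mult mult.assoc[symmetric])
  next
    fix d
    have "hcomp d p \<in> poly_ring n" using p keys_hcomp[of d p] by (auto simp: apo_def poly_ring_def)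
    moreover have "Lf S (sg c 1 * hcomp d p) = 0" for c
      using p by (simp add: Lf_hcomp apo_iff)
    ultimately show "hcomp d p \<in> apo n S" by (simp add: apo_iff)
  }
qed

lemma one_notin: "const 1 \<notin> (apo n S :: 'k::field mpol set)"
proof
  assume "const 1 \<in> (apo n S :: 'k mpol set)"
  obtain s0 where s0: "s0 \<in> S" using Sne by blast
  have "Lf S (sg s0 1 * (const 1 :: 'k mpol)) = 1"
    by (simp add: const_def mult_single Lf_mono[OF finS] s0)
  with \<open>const 1 \<in> apo n S\<close> show False by (simp add: apo_iff)
qed

lemma high: "4 < d \<Longrightarrow> hom_part n d \<subseteq> (apo n S :: 'k::field mpol set)"
proof
  fix p :: "'k mpol" assume d: "4 < d" and p: "p \<in> hom_part n d"
  have "Lf S (sg c 1 * p) = 0" for c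
  proof (rule ccontr)
    assume "Lf S (sg c 1 * p) \<noteq> 0"
    then obtain s b where sb: "s \<in> S" "s = c + b" "b \<in> ks p" by (rule Lf_nonzero_E)
    have "mdeg s = mdeg c + mdeg b" using sb(2) mdeg_add by simp
    moreover have "mdeg b = d" using p sb(3) by (simp add: hom_part_def)
    moreover have "mdeg s = 4" using S4 sb(1) by simp
    ultimately show False using d by linarith
  qed
  then show "p \<in> apo n S" using p by (simp add: apo_iff hom_part_def)
qed

lemma socle_low:
  assumes d: "d < 4"
  shows "socle_lift n (apo n S :: 'k::field mpol set) d = apo n S \<inter> hom_part n d"
proof
  show "apo n S \<inter> hom_part n d \<subseteq> socle_lift n (apo n S :: 'k mpol set) d"
    using ideal var_poly_ring unfolding socle_lift_def is_homogeneous_ideal_def is_ideal_def by blast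
  show "socle_lift n (apo n S :: 'k mpol set) d \<subseteq> apo n S \<inter> hom_part n d"
  proof
    fix f :: "'k mpol" assume "f \<in> socle_lift n (apo n S) d"
    then have f: "f \<in> hom_part n d" and fj: "\<And>j. j < n \<Longrightarrow> var j * f \<in> apo n S"
      by (auto simp: socle_lift_def)
    have "Lf S (sg c 1 * f) = 0" for c
    proof (rule ccontr)
      assume "Lf S (sg c 1 * f) \<noteq> 0"
      then obtain s b where sb: "s \<in> S" "s = c + b" "b \<in> ks f" by (rule Lf_nonzero_E)
      have "mdeg s = mdeg c + mdeg b" using sb(2) mdeg_add by simp
      moreover have "mdeg b = d" using f sb(3) by (simp add: hom_part_def)
      moreover have "mdeg s = 4" using S4 sb(1) by simp
      ultimately have "mdeg c > 0" using d by linarith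
      then have "c \<noteq> 0" by auto
      then obtain j where j: "j \<in> ks c" by (metis keys_eq_empty equals0I)
      then have "j \<in> ks s" using sb(2) keys_add_nat by blast
      then have jn: "j < n" using Sn[OF sb(1)] by blast
      define c' where "c' = c - sg j 1"
      have cc: "c = c' + sg j 1" using split_key[OF j] by (simp add: c'_def add.commute)
      have "sg c 1 * f = sg c' 1 * (var j * f)"
        unfolding var_def by (simp add: mult.assoc[symmetric] mult_single cc)
      moreover have "Lf S (sg c' 1 * (var j * f)) = 0" using fj[OF jn] by (simp add: apo_iff)
      ultimately show False using \<open>Lf S (sg c 1 * f) \<noteq> 0\<close> by metis
    qed
    then show "f \<in> apo n S \<inter> hom_part n d" using f by (simp add: apo_iff hom_part_def)
  qed
qed

lemma socle_4: "socle_lift n (apo n S :: 'k::field mpol set) 4 = hom_part n 4"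
  using var_mult_hom[of _ n _ 4] high[of 5] unfolding socle_lift_def by auto

lemma ker_eq: "{v \<in> hom_part n d. phi S v = 0} = (apo n S :: 'k::field mpol set) \<inter> hom_part n d"
  by (auto simp: phi_eq_0_iff[OF finS] apo_iff hom_part_def)

lemma hilb_eq: "hilb n (apo n S :: 'k::field mpol set) d = kdim (phi S ` hom_part n d :: 'k mpol set)"
proof -
  have "vs.dim (hom_part n d :: 'k mpol set) =
      vs.dim {v \<in> (hom_part n d :: 'k mpol set). phi S v = 0} + vs.dim (phi S ` (hom_part n d :: 'k mpol set))"
  proof (rule vs.rank_nullity_gen)
    show "vs.subspace (hom_part n d :: 'k mpol set)" by (rule subspace_hom_part)
    show "hom_part n d \<subseteq> vs.span ((\<lambda>a. sg a (1::'k)) ` mons d n)" by (rule hom_part_span)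
    show "finite ((\<lambda>a. sg a (1::'k)) ` mons d n)" by (simp add: finite_monos)
    show "Vector_Spaces.linear smul smul (phi S :: 'k mpol \<Rightarrow> _)" by (rule linear_phi[OF finS])
  qed
  then show ?thesis unfolding hilb_def kdim_eq ker_eq by simp
qed

lemma hilb_high: "4 < d \<Longrightarrow> hilb n (apo n S :: 'k::field mpol set) d = 0"
proof -
  assume "4 < d"
  then have "hom_part n d \<subseteq> (apo n S :: 'k mpol set)" by (rule high)
  then have "(apo n S :: 'k mpol set) \<inter> hom_part n d = hom_part n d" by blast
  then show ?thesis unfolding hilb_def by simp
qed

lemma image_span:
  "phi S ` hom_part n d \<subseteq> vs.span (phi S ` (\<lambda>a. sg a 1) ` mons d n :: 'k::field mpol set)"
proof -
  interpret lp: Vector_Spaces.linear smul smul "phi S :: 'k mpol \<Rightarrow> 'k mpol"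
    by (rule linear_phi[OF finS])
  have "phi S ` hom_part n d \<subseteq> phi S ` vs.span ((\<lambda>a. sg a 1) ` mons d n :: 'k mpol set)"
    using hom_part_span by blast
  also have "\<dots> = vs.span (phi S ` (\<lambda>a. sg a 1) ` mons d n)"
    by (rule lp.span_image[symmetric])
  finally show ?thesis .
qed

lemma hilb_upper:
  assumes T: "finite T" and sp: "\<And>a. a \<in> mons d n \<Longrightarrow> phi S (sg a 1) \<in> vs.span T"
  shows "hilb n (apo n S :: 'k::field mpol set) d \<le> card (T :: 'k mpol set)"
proof -
  have "vs.span (phi S ` (\<lambda>a. sg a 1) ` mons d n :: 'k mpol set) \<subseteq> vs.span T"
    using sp by (intro vs.span_minimal) auto
  then have "phi S ` hom_part n d \<subseteq> vs.span T" using image_span by blast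
  then show ?thesis unfolding hilb_eq kdim_eq using vs.dim_le_card T by blast
qed

lemma mem_span_keys: "p \<in> vs.span ((\<lambda>c. sg c 1) ` ks (p :: 'k::field mpol))"
proof -
  have "p = (\<Sum>c\<in>ks p. smul (lk p c) (sg c 1))"
    by (subst poly_decomp[of p]) (simp add: smul_single)
  also have "\<dots> \<in> vs.span ((\<lambda>c. sg c 1) ` ks p)"
    by (intro vs.span_sum vs.span_scale vs.span_base) auto
  finally show ?thesis .
qed

lemma keys_phi_mono: "ks (phi S (sg a (1::'k::field))) = {c. a + c \<in> S}"
  by (auto simp: in_keys_iff lookup_phi_mono[OF finS] split: if_splits)

lemma phi_mono_in_span:
  assumes "\<And>c. a + c \<in> S \<Longrightarrow> c \<in> C"
  shows "phi S (sg a (1::'k::field)) \<in> vs.span ((\<lambda>c. sg c 1) ` C)"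
proof -
  have "(\<lambda>c. sg c 1) ` ks (phi S (sg a (1::'k))) \<subseteq> ((\<lambda>c. sg c 1) ` C :: 'k mpol set)"
    using assms by (auto simp: keys_phi_mono)
  then show ?thesis using mem_span_keys vs.span_mono by blast
qed

lemma hilb_lower:
  assumes P: "finite P" and Pd: "\<And>p. p \<in> P \<Longrightarrow> fst p \<in> mons d n"
    and Pdelta: "\<And>p q. p \<in> P \<Longrightarrow> q \<in> P \<Longrightarrow> (fst p + snd q \<in> S) = (p = q)"
  shows "card P \<le> hilb n (apo n S :: 'k::field mpol set) d"
proof -
  define v :: "(nat \<Rightarrow>\<^sub>0 nat) \<times> (nat \<Rightarrow>\<^sub>0 nat) \<Rightarrow> 'k mpol" where "v p = phi S (sg (fst p) 1)" for p
  have lv: "lk (v p) (snd q) = (if p = q then 1 else 0)" if "p \<in> P" "q \<in> P" for p q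
    using Pdelta[OF that] by (simp add: v_def lookup_phi_mono[OF finS])
  have inj: "inj_on v P"
  proof (rule inj_onI)
    fix p q assume pq: "p \<in> P" "q \<in> P" "v p = v q"
    then have "lk (v p) (snd q) = lk (v q) (snd q)" by simp
    then show "p = q" using lv[OF pq(1,2)] lv[OF pq(2,2)] by (auto split: if_splits)
  qed
  have ind: "vs.independent (v ` P)"
  proof (rule vs.independent_if_scalars_zero)
    show "finite (v ` P)" using P by simp
    fix u x assume sum0: "(\<Sum>x\<in>v ` P. smul (u x) x) = 0" and x: "x \<in> v ` P"
    then obtain p where p: "p \<in> P" "x = v p" by blast
    have "0 = lk (\<Sum>x\<in>v ` P. smul (u x) x) (snd p)" using sum0 by simp
    also have "\<dots> = (\<Sum>x\<in>v ` P. u x * lk x (snd p))" by (simp add: lookup_sum lookup_smul)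
    also have "\<dots> = (\<Sum>q\<in>P. u (v q) * lk (v q) (snd p))" by (rule sum.reindex[OF inj, unfolded comp_def])
    also have "\<dots> = (\<Sum>q\<in>P. if q = p then u (v q) else 0)"
      by (rule sum.cong[OF refl]) (simp add: lv p(1))
    also have "\<dots> = u (v p)" using P p(1) by simp
    finally show "u x = 0" using p by simp
  qed
  have sub: "v ` P \<subseteq> phi S ` hom_part n d"
  proof
    fix x assume "x \<in> v ` P"
    then obtain p where p: "p \<in> P" "x = v p" by blast
    have "sg (fst p) (1::'k) \<in> hom_part n d" using Pd[OF p(1)] by (auto simp: hom_part_def poly_ring_def mons_def)
    then show "x \<in> phi S ` hom_part n d" using p by (auto simp: v_def)
  qed
  have "card (v ` P) \<le> vs.dim (phi S ` (hom_part n d :: 'k mpol set))"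
    by (rule vs.card_le_dim_gen[OF ind sub image_span]) (simp add: finite_monos)
  then show ?thesis using card_image[OF inj] unfolding hilb_eq kdim_eq by simp
qed

lemma graded: "hilb n (apo n S :: 'k::field mpol set) 4 = 1 \<Longrightarrow> graded_AG n (apo n S :: 'k mpol set)"
proof -
  assume h4: "hilb n (apo n S :: 'k mpol set) 4 = 1"
  let ?f = "\<lambda>d. kdim (socle_lift n (apo n S :: 'k mpol set) d) - kdim (apo n S \<inter> hom_part n d :: 'k mpol set)"
  have "?f d = (if d = 4 then 1 else 0)" if "d < 5" for d
  proof (cases "d = 4")
    case True
    have "socle_lift n (apo n S :: 'k mpol set) 4 = hom_part n 4" by (rule socle_4)
    then show ?thesis using h4 True by (simp add: hilb_def)
  next
    case False
    then have "d < 4" using that by simp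
    then have "socle_lift n (apo n S :: 'k mpol set) d = apo n S \<inter> hom_part n d" by (rule socle_low)
    then show ?thesis using False by simp
  qed
  then have "(\<Sum>d<5. ?f d) = (\<Sum>d<(5::nat). if d = 4 then 1 else 0)" by (intro sum.cong) auto
  also have "\<dots> = 1" by simp
  finally have "(\<Sum>d<5. ?f d) = 1" .
  moreover have "\<forall>d\<ge>5. hom_part n d \<subseteq> (apo n S :: 'k mpol set)"
  proof (intro allI impI)
    fix d :: nat assume "5 \<le> d"
    then show "hom_part n d \<subseteq> (apo n S :: 'k mpol set)" by (intro high) simp
  qed
  ultimately show ?thesis unfolding graded_AG_def using ideal one_notin by blast
qed

end


definition Pairs :: "nat \<Rightarrow> (nat \<times> nat) set" where
  "Pairs m = {(i, j). i \<le> j \<and> j < m}"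

definition Tr :: "nat \<Rightarrow> (nat \<times> nat \<times> nat) set" where
  "Tr m = {(i, j, k). i \<le> j \<and> j \<le> k \<and> k < m}"

lemma finite_Pairs: "finite (Pairs m)"
  by (rule finite_subset[of _ "{..<m} \<times> {..<m}"]) (auto simp: Pairs_def)

lemma finite_Tr: "finite (Tr m)"
  by (rule finite_subset[of _ "{..<m} \<times> {..<m} \<times> {..<m}"]) (auto simp: Tr_def)

lemma card_Pairs: "card (Pairs m) = (m + 1 choose 2)"
proof (induction m)
  case 0
  then show ?case by (simp add: Pairs_def)
next
  case (Suc m)
  have eq: "Pairs (Suc m) = Pairs m \<union> (\<lambda>i. (i, m)) ` {..m}"
    by (auto simp: Pairs_def)
  have "card (Pairs (Suc m)) = card (Pairs m) + card ((\<lambda>i. (i, m)) ` {..m})"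
    unfolding eq by (rule card_Un_disjoint[OF finite_Pairs]) (auto simp: Pairs_def)
  also have "card ((\<lambda>i. (i, m)) ` {..m}) = Suc m"
    by (subst card_image) (auto simp: inj_on_def)
  finally show ?case using Suc by (simp add: numeral_eq_Suc)
qed

lemma card_Tr: "card (Tr m) = (m + 2 choose 3)"
proof (induction m)
  case 0
  have "Tr 0 = {}" by (auto simp: Tr_def)
  then show ?case by (simp add: numeral_eq_Suc)
next
  case (Suc m)
  have eq: "Tr (Suc m) = Tr m \<union> (\<lambda>(i, j). (i, j, m)) ` Pairs (Suc m)"
  proof
    show "Tr (Suc m) \<subseteq> Tr m \<union> (\<lambda>(i, j). (i, j, m)) ` Pairs (Suc m)"
    proof
      fix x assume "x \<in> Tr (Suc m)"
      then obtain i j k where x: "x = (i, j, k)" "i \<le> j" "j \<le> k" "k < Suc m" by (auto simp: Tr_def)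
      show "x \<in> Tr m \<union> (\<lambda>(i, j). (i, j, m)) ` Pairs (Suc m)"
      proof (cases "k = m")
        case True
        then have "x = (\<lambda>(i, j). (i, j, m)) (i, j)" "(i, j) \<in> Pairs (Suc m)" using x by (auto simp: Pairs_def)
        then show ?thesis by blast
      next
        case False
        then show ?thesis using x by (auto simp: Tr_def)
      qed
    qed
  qed (auto simp: Tr_def Pairs_def)
  have "card (Tr (Suc m)) = card (Tr m) + card ((\<lambda>(i, j). (i, j, m)) ` Pairs (Suc m))"
    unfolding eq by (rule card_Un_disjoint[OF finite_Tr finite_imageI[OF finite_Pairs]]) (auto simp: Tr_def Pairs_def)
  also have "card ((\<lambda>(i, j). (i, j, m)) ` Pairs (Suc m)) = card (Pairs (Suc m))"
    by (subst card_image) (auto simp: inj_on_def)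
  finally show ?case using Suc by (simp add: card_Pairs numeral_eq_Suc)
qed

lemma two_choose2: "2 * (n choose 2) = n * (n - 1)"
proof (induction n)
  case (Suc n)
  have "Suc n choose 2 = n + (n choose 2)" by (simp add: numeral_eq_Suc)
  then show ?case using Suc by (cases n) (auto simp: algebra_simps)
qed simp

lemma two_card_Pairs: "2 * card (Pairs m) = m * (m + 1)"
  unfolding card_Pairs using two_choose2[of "m+1"] by (simp add: mult.commute)

lemma choose_identity: "m + (m + 2 choose 3) = m * (m + 1) + (m choose 3)"
proof -
  have a: "m + 2 choose 3 = (m + 1 choose 2) + (m + 1 choose 3)"
    by (simp add: numeral_eq_Suc)
  have b: "m + 1 choose 3 = (m choose 2) + (m choose 3)"
    by (simp add: numeral_eq_Suc)
  have c: "2 * (m + 1 choose 2) = (m + 1) * m" using two_choose2[of "m+1"] by simp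
  have d: "2 * (m choose 2) = m * (m - 1)" by (rule two_choose2)
  have "m * (m - 1) + (m + 1) * m + 2 * m = 2 * (m * (m + 1))"
    by (cases m) (auto simp: algebra_simps)
  then show ?thesis using a b c d by linarith
qed

abbreviation e1 :: "nat \<Rightarrow> nat \<Rightarrow>\<^sub>0 nat" where "e1 i \<equiv> sg i 1"

definition tmon :: "nat \<times> nat \<times> nat \<Rightarrow> nat \<Rightarrow>\<^sub>0 nat" where
  "tmon t = (case t of (i, j, k) \<Rightarrow> e1 i + e1 j + e1 k)"

lemma lk_e1[simp]: "lk (sg i (v::nat)) x = (if i = x then v else 0)"
  by (simp add: lookup_single when_def)

lemma lk_tmon: "lk (tmon (i, j, k)) x = (if i = x then 1 else 0) + (if j = x then 1 else 0) + (if k = x then 1 else 0)"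
  by (simp add: tmon_def lookup_add)

lemma pair_inj:
  assumes "j \<le> k" "j' \<le> k'" "e1 j + e1 k = e1 j' + e1 k'"
  shows "j = j' \<and> k = k'"
proof -
  have L: "lk (e1 j + e1 k) x = lk (e1 j' + e1 k') x" for x using assms(3) by simp
  have a: "j = j' \<or> j = k'" using L[of j] by (auto simp: lookup_add split: if_splits)
  have b: "j' = j \<or> j' = k" using L[of j'] by (auto simp: lookup_add split: if_splits)
  have jj: "j = j'" using a b assms(1,2) by linarith
  then have "e1 k = e1 k'" using assms(3) by simp
  then have "lk (e1 k) k = lk (e1 k') k" by simp
  then show ?thesis using jj by (simp split: if_splits)
qed

lemma tmon_inj:
  assumes "(i, j, k) \<in> Tr m" "(i', j', k') \<in> Tr m" "tmon (i, j, k) = tmon (i', j', k')"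
  shows "(i, j, k) = (i', j', k')"
proof -
  have L: "lk (tmon (i, j, k)) x = lk (tmon (i', j', k')) x" for x using assms(3) by simp
  note L' = L[unfolded lk_tmon]
  have o: "i \<le> j" "j \<le> k" "i' \<le> j'" "j' \<le> k'" using assms(1,2) by (auto simp: Tr_def)
  have a: "i = i' \<or> i = j' \<or> i = k'" using L'[of i] by (auto split: if_splits)
  have b: "i' = i \<or> i' = j \<or> i' = k" using L'[of i'] by (auto split: if_splits)
  have ii: "i = i'" using a b o by linarith
  have "e1 i + (e1 j + e1 k) = e1 i + (e1 j' + e1 k')"
    using assms(3) ii by (simp add: tmon_def add.assoc)
  then have "e1 j + e1 k = e1 j' + e1 k'" by simp
  then show ?thesis using pair_inj[OF o(2,4)] ii by simp
qed

lemma mdeg_tmon: "mdeg (tmon t) = 3"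
  by (cases t) (auto simp: tmon_def mdeg_add)

lemma keys_tmon: "(i, j, k) \<in> Tr m \<Longrightarrow> ks (tmon (i, j, k)) \<subseteq> {..<m}"
  by (auto simp: tmon_def Tr_def keys_add_nat)


lemma mons0: "mons 0 n = {0}"
  by (auto simp: mons_def mdeg_eq_0)

lemma mons1: "mons 1 n \<subseteq> e1 ` {..<n}"
proof
  fix a assume "a \<in> mons 1 n"
  then have a: "mdeg a = Suc 0" "ks a \<subseteq> {..<n}" by (auto simp: mons_def)
  obtain i b where "i \<in> ks a" "a = e1 i + b" "mdeg b = 0" using mdeg_Suc[OF a(1)] .
  then show "a \<in> e1 ` {..<n}" using a(2) by (auto simp: mdeg_eq_0)
qed

lemma card_mons1: "card (mons 1 n) \<le> n"
proof -
  have "card (mons 1 n) \<le> card (e1 ` {..<n})" by (rule card_mono[OF _ mons1]) simp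
  also have "\<dots> \<le> card {..<n}" by (rule card_image_le) simp
  finally show ?thesis by simp
qed

lemma mons2: "mons 2 m \<subseteq> (\<lambda>(i, j). e1 i + e1 j) ` Pairs m"
proof
  fix a assume "a \<in> mons 2 m"
  then have a: "mdeg a = Suc (Suc 0)" "ks a \<subseteq> {..<m}" by (auto simp: mons_def)
  obtain i b where ib: "i \<in> ks a" "a = e1 i + b" "mdeg b = Suc 0" using mdeg_Suc[OF a(1)] .
  obtain j c where jc: "j \<in> ks b" "b = e1 j + c" "mdeg c = 0" using mdeg_Suc[OF ib(3)] .
  have "j \<in> ks a" using ib(2) jc(1) keys_add_nat by blast
  then have ij: "i < m" "j < m" using ib(1) a(2) by auto
  have aij: "a = e1 i + e1 j" using ib(2) jc(2,3) by (simp add: mdeg_eq_0)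
  show "a \<in> (\<lambda>(i, j). e1 i + e1 j) ` Pairs m"
  proof (cases "i \<le> j")
    case True
    then show ?thesis using aij ij by (auto simp: Pairs_def intro!: image_eqI[of _ _ "(i,j)"])
  next
    case False
    then show ?thesis using aij ij by (auto simp: Pairs_def add.commute intro!: image_eqI[of _ _ "(j,i)"])
  qed
qed

lemma card_mons2: "card (mons 2 m) \<le> card (Pairs m)"
  by (meson card_image_le card_mono finite_Pairs finite_imageI le_trans mons2)

locale constr =
  fixes m :: nat and idx :: "nat \<times> nat \<times> nat \<Rightarrow> nat"
  assumes m1: "1 \<le> m" and bij: "bij_betw idx (Tr m) {..<card (Tr m)}"
begin

definition rr where "rr = m + card (Tr m)"
definition yv where "yv t = m + idx t"
definition SF where "SF = (\<lambda>t. e1 (yv t) + tmon t) ` Tr m"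

lemma yv_bounds: "t \<in> Tr m \<Longrightarrow> m \<le> yv t \<and> yv t < rr"
  using bij_betwE[OF bij] by (auto simp: yv_def rr_def)

lemma yv_inj: "t \<in> Tr m \<Longrightarrow> t' \<in> Tr m \<Longrightarrow> yv t = yv t' \<Longrightarrow> t = t'"
  using bij_betw_imp_inj_on[OF bij] by (auto simp: yv_def inj_on_def)

lemma lk_tmon_high: "t \<in> Tr m \<Longrightarrow> m \<le> x \<Longrightarrow> lk (tmon t) x = 0"
  by (cases t) (auto simp: lk_tmon Tr_def)

lemma lk_sf_high: "t \<in> Tr m \<Longrightarrow> m \<le> x \<Longrightarrow> lk (e1 (yv t) + tmon t) x = (if yv t = x then 1 else 0)"
  by (simp add: lookup_add lk_tmon_high)

lemma diag_Tr: "i < m \<Longrightarrow> (i, i, i) \<in> Tr m"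
  by (simp add: Tr_def)

lemma tmon_inj': "t \<in> Tr m \<Longrightarrow> t' \<in> Tr m \<Longrightarrow> tmon t = tmon t' \<Longrightarrow> t = t'"
  by (cases t, cases t') (metis tmon_inj)

lemma SF_E:
  assumes "x \<in> SF"
  obtains t where "t \<in> Tr m" "x = e1 (yv t) + tmon t"
  using assms unfolding SF_def by blast

lemma apolar: "apolar rr SF"
proof
  show "finite SF" unfolding SF_def using finite_Tr by simp
  fix s assume "s \<in> SF"
  then obtain t where t: "t \<in> Tr m" "s = e1 (yv t) + tmon t" by (rule SF_E)
  show "mdeg s = 4" using t by (simp add: mdeg_add mdeg_tmon)
  show "ks s \<subseteq> {..<rr}"
    using t yv_bounds[OF t(1)] keys_add_nat[of "e1 (yv t)" "tmon t"]
    by (cases t) (auto dest!: keys_tmon simp: rr_def)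
next
  show "SF \<noteq> {}" using diag_Tr[of 0] m1 by (auto simp: SF_def)
qed

lemma case_A:
  assumes i: "i < m" and j: "j < m"
  shows "(e1 i + (sg j 2 + e1 (yv (j, j, j))) \<in> SF) = (i = j)"
proof
  assume "e1 i + (sg j 2 + e1 (yv (j, j, j))) \<in> SF"
  then obtain t where t: "t \<in> Tr m" "e1 i + (sg j 2 + e1 (yv (j, j, j))) = e1 (yv t) + tmon t"
    by (rule SF_E)
  have jT: "(j, j, j) \<in> Tr m" using diag_Tr[OF j] .
  have yj: "m \<le> yv (j, j, j)" using yv_bounds[OF jT] by simp
  have ne: "i \<noteq> yv (j, j, j)" "j \<noteq> yv (j, j, j)" using i j yj by auto
  have "lk (e1 i + (sg j 2 + e1 (yv (j, j, j)))) (yv (j, j, j)) = 1"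
    using ne by (simp add: lookup_add)
  moreover have "lk (e1 i + (sg j 2 + e1 (yv (j, j, j)))) (yv (j, j, j)) = lk (e1 (yv t) + tmon t) (yv (j, j, j))"
    using t(2) by simp
  ultimately have "(if yv t = yv (j, j, j) then 1 else 0) = (1::nat)" using lk_sf_high[OF t(1) yj] by simp
  then have "yv t = yv (j, j, j)" by (simp split: if_splits)
  then have tj: "t = (j, j, j)" using yv_inj[OF t(1) jT] by simp
  have "lk (e1 i + (sg j 2 + e1 (yv (j, j, j)))) i = lk (e1 (yv t) + tmon t) i"
    using t(2) by simp
  moreover have "yv t \<noteq> i" using tj ne by simp
  ultimately have "1 + (if j = i then 2 else 0) = (3 * (if j = i then 1 else 0) :: nat)"
    using ne tj by (simp add: lookup_add lk_tmon)
  then show "i = j" by (simp split: if_splits)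
next
  assume ij: "i = j"
  have "e1 i + (sg j 2 + e1 (yv (j, j, j))) = e1 (yv (j, j, j)) + tmon (j, j, j)"
    using ij by (intro poly_mapping_eqI) (simp add: lookup_add lk_tmon)
  then show "e1 i + (sg j 2 + e1 (yv (j, j, j))) \<in> SF"
    using diag_Tr[OF j] unfolding SF_def by blast
qed

lemma case_B:
  assumes i: "i < m" and t: "t \<in> Tr m"
  shows "e1 i + tmon t \<notin> SF"
proof
  assume "e1 i + tmon t \<in> SF"
  then obtain t' where t': "t' \<in> Tr m" "e1 i + tmon t = e1 (yv t') + tmon t'" by (rule SF_E)
  have y: "m \<le> yv t'" using yv_bounds[OF t'(1)] by simp
  have "lk (e1 i + tmon t) (yv t') = lk (e1 (yv t') + tmon t') (yv t')" using t'(2) by simp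
  then show False using lk_sf_high[OF t'(1) y] lk_tmon_high[OF t y] i y by (simp add: lookup_add)
qed

lemma case_C:
  assumes t: "t \<in> Tr m" and j: "j < m"
  shows "e1 (yv t) + (sg j 2 + e1 (yv (j, j, j))) \<notin> SF"
proof
  assume "e1 (yv t) + (sg j 2 + e1 (yv (j, j, j))) \<in> SF"
  then obtain t' where t': "t' \<in> Tr m" "e1 (yv t) + (sg j 2 + e1 (yv (j, j, j))) = e1 (yv t') + tmon t'"
    by (rule SF_E)
  have jT: "(j, j, j) \<in> Tr m" using diag_Tr[OF j] .
  have y1: "m \<le> yv t" using yv_bounds[OF t] by simp
  have y2: "m \<le> yv (j, j, j)" using yv_bounds[OF jT] by simp
  have L1: "lk (e1 (yv t) + (sg j 2 + e1 (yv (j, j, j)))) (yv t) = lk (e1 (yv t') + tmon t') (yv t)"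
    using t'(2) by simp
  have L2: "lk (e1 (yv t) + (sg j 2 + e1 (yv (j, j, j)))) (yv (j, j, j)) = lk (e1 (yv t') + tmon t') (yv (j, j, j))"
    using t'(2) by simp
  have ne: "j \<noteq> yv t" "j \<noteq> yv (j, j, j)" using j y1 y2 by auto
  have V1: "lk (e1 (yv t) + (sg j 2 + e1 (yv (j, j, j)))) (yv t) = 1 + (if yv (j, j, j) = yv t then 1 else 0)"
    using ne by (simp add: lookup_add)
  have V2: "lk (e1 (yv t) + (sg j 2 + e1 (yv (j, j, j)))) (yv (j, j, j)) = (if yv t = yv (j, j, j) then 1 else 0) + 1"
    using ne by (simp add: lookup_add)
  have A1: "(1::nat) + (if yv (j, j, j) = yv t then 1 else 0) = (if yv t' = yv t then 1 else 0)"
    using L1 lk_sf_high[OF t'(1) y1] V1 by simp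
  have A2: "(if yv t = yv (j, j, j) then 1 else 0) + (1::nat) = (if yv t' = yv (j, j, j) then 1 else 0)"
    using L2 lk_sf_high[OF t'(1) y2] V2 by simp
  show False
  proof (cases "yv t = yv (j, j, j)")
    case True
    then show False using A1 by (simp split: if_splits)
  next
    case False
    have "yv t' = yv t" using A1 False by (cases "yv t' = yv t") auto
    moreover have "yv t' = yv (j, j, j)" using A2 False by (cases "yv t' = yv (j, j, j)") auto
    ultimately show False using False by simp
  qed
qed

lemma case_D:
  assumes t: "t \<in> Tr m" and t2: "t2 \<in> Tr m"
  shows "(e1 (yv t) + tmon t2 \<in> SF) = (t = t2)"
proof
  assume "e1 (yv t) + tmon t2 \<in> SF"
  then obtain t' where t': "t' \<in> Tr m" "e1 (yv t) + tmon t2 = e1 (yv t') + tmon t'" by (rule SF_E)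
  have y1: "m \<le> yv t" using yv_bounds[OF t] by simp
  have "lk (e1 (yv t) + tmon t2) (yv t) = lk (e1 (yv t') + tmon t') (yv t)" using t'(2) by simp
  moreover have "lk (e1 (yv t) + tmon t2) (yv t) = 1" using lk_tmon_high[OF t2 y1] by (simp add: lookup_add)
  ultimately have "(if yv t' = yv t then 1 else 0) = (1::nat)" using lk_sf_high[OF t'(1) y1] by simp
  then have "yv t' = yv t" by (cases "yv t' = yv t") auto
  then have tt: "t' = t" using yv_inj[OF t'(1) t] by simp
  then have "tmon t2 = tmon t" using t'(2) by simp
  then show "t = t2" using tmon_inj'[OF t2 t] by simp
next
  assume "t = t2"
  then show "e1 (yv t) + tmon t2 \<in> SF" using t unfolding SF_def by blast
qed

end


lemma sg_eq_iff: "(v::nat) \<noteq> 0 \<Longrightarrow> sg a v = sg b v \<longleftrightarrow> a = b"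
proof
  assume "v \<noteq> 0" "sg a v = sg b v"
  then have "lk (sg a v) a = lk (sg b v) a" by simp
  then show "a = b" using \<open>v \<noteq> 0\<close> by (simp split: if_splits)
qed simp

lemma e1_eq_iff: "e1 a = e1 b \<longleftrightarrow> a = b" "sg a (Suc 0) = sg b (Suc 0) \<longleftrightarrow> a = b"
  by (simp_all add: sg_eq_iff)

context constr begin

definition P1 where
  "P1 = (\<lambda>i. (e1 i, sg i 2 + e1 (yv (i, i, i)))) ` {..<m} \<union> (\<lambda>t. (e1 (yv t), tmon t)) ` Tr m"

lemma P1_delta:
  assumes p: "p \<in> P1" and q: "q \<in> P1"
  shows "(fst p + snd q \<in> SF) = (p = q)"
proof -
  {
    fix i j assume i: "i < m" and j: "j < m"
    have "(e1 i + (sg j 2 + e1 (yv (j, j, j))) \<in> SF) =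
      ((e1 i, sg i 2 + e1 (yv (i, i, i))) = (e1 j, sg j 2 + e1 (yv (j, j, j))))"
      using case_A[OF i j] by (auto simp: e1_eq_iff)
  } note AA = this
  {
    fix i t assume i: "i < m" and t: "t \<in> Tr m"
    have ne: "i \<noteq> yv t" using yv_bounds[OF t] i by simp
    have "(e1 i + tmon t \<in> SF) = ((e1 i, sg i 2 + e1 (yv (i, i, i))) = (e1 (yv t), tmon t))"
      using case_B[OF i t] ne by (simp add: e1_eq_iff)
    moreover have "(e1 (yv t) + (sg i 2 + e1 (yv (i, i, i))) \<in> SF) = ((e1 (yv t), tmon t) = (e1 i, sg i 2 + e1 (yv (i, i, i))))"
      using case_C[OF t i] ne by (simp add: e1_eq_iff)
    ultimately have "(e1 i + tmon t \<in> SF) = ((e1 i, sg i 2 + e1 (yv (i, i, i))) = (e1 (yv t), tmon t))"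
      "(e1 (yv t) + (sg i 2 + e1 (yv (i, i, i))) \<in> SF) = ((e1 (yv t), tmon t) = (e1 i, sg i 2 + e1 (yv (i, i, i))))"
      by blast+
  } note AB = this
  {
    fix t t2 assume t: "t \<in> Tr m" and t2: "t2 \<in> Tr m"
    have "(e1 (yv t) + tmon t2 \<in> SF) = ((e1 (yv t), tmon t) = (e1 (yv t2), tmon t2))"
      using case_D[OF t t2] yv_inj[OF t t2] by (auto simp: e1_eq_iff)
  } note BB = this
  show ?thesis using p q unfolding P1_def
    by (elim UnE imageE; hypsubst; simp only: fst_conv snd_conv AA AB BB lessThan_iff)
qed

lemma card_P1: "card P1 = rr"
proof -
  have inj1: "inj_on (\<lambda>i. (e1 i, sg i 2 + e1 (yv (i, i, i)))) {..<m}"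
    by (auto simp: inj_on_def e1_eq_iff)
  have inj2: "inj_on (\<lambda>t. (e1 (yv t), tmon t)) (Tr m)"
    using yv_inj by (auto simp: inj_on_def e1_eq_iff)
  have disj: "(\<lambda>i. (e1 i, sg i 2 + e1 (yv (i, i, i)))) ` {..<m} \<inter> (\<lambda>t. (e1 (yv t), tmon t)) ` Tr m = {}"
    using yv_bounds by (force simp: e1_eq_iff)
  have "card P1 = card ((\<lambda>i. (e1 i, sg i 2 + e1 (yv (i, i, i)))) ` {..<m}) + card ((\<lambda>t. (e1 (yv t), tmon t)) ` Tr m)"
    unfolding P1_def by (rule card_Un_disjoint) (use finite_Tr disj in auto)
  also have "\<dots> = m + card (Tr m)" using card_image[OF inj1] card_image[OF inj2] by simp
  finally show ?thesis by (simp add: rr_def)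
qed

lemma finite_P1: "finite P1"
  unfolding P1_def using finite_Tr by simp

lemma P1_fst: "p \<in> P1 \<Longrightarrow> fst p \<in> mons 1 rr"
  unfolding P1_def mons_def using yv_bounds by (auto simp: rr_def)

lemma P1_snd: "p \<in> P1 \<Longrightarrow> snd p \<in> mons 3 rr"
proof -
  assume "p \<in> P1"
  then consider (a) i where "i < m" "p = (e1 i, sg i 2 + e1 (yv (i, i, i)))"
    | (b) t where "t \<in> Tr m" "p = (e1 (yv t), tmon t)" unfolding P1_def by blast
  then show ?thesis
  proof cases
    case a
    have "yv (i, i, i) < rr" using yv_bounds[OF diag_Tr[OF a(1)]] by simp
    then show ?thesis using a keys_add_nat[of "sg i 2" "e1 (yv (i, i, i))"]
      by (auto simp: mons_def mdeg_add rr_def)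
  next
    case b
    obtain i j k where t: "t = (i, j, k)" by (cases t)
    have "ks (tmon t) \<subseteq> {..<m}" using keys_tmon b(1) t by simp
    then have "ks (tmon t) \<subseteq> {..<rr}" by (auto simp: rr_def)
    then show ?thesis using b(2) mdeg_tmon[of t] by (simp add: mons_def)
  qed
qed

interpretation ap: apolar rr SF by (rule apolar)

lemma h1: "hilb rr (apo rr SF :: 'k::field mpol set) 1 = rr"
proof (rule antisym)
  let ?T = "phi SF ` (\<lambda>a. sg a 1) ` mons 1 rr :: 'k mpol set"
  have "hilb rr (apo rr SF :: 'k mpol set) 1 \<le> card ?T"
  proof (rule ap.hilb_upper)
    show "finite ?T" by (intro finite_imageI finite_monos)
    fix a assume "a \<in> mons 1 rr"
    then show "phi SF (sg a 1) \<in> vs.span ?T" by (intro vs.span_base imageI)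
  qed
  also have "\<dots> \<le> card ((\<lambda>a. sg a (1::'k)) ` mons 1 rr)"
    by (intro card_image_le finite_imageI finite_monos)
  also have "\<dots> \<le> card (mons 1 rr)"
    by (intro card_image_le finite_monos)
  also have "\<dots> \<le> rr" by (rule card_mons1)
  finally show "hilb rr (apo rr SF :: 'k mpol set) 1 \<le> rr" .
  have "card P1 \<le> hilb rr (apo rr SF :: 'k mpol set) 1"
    by (rule ap.hilb_lower[OF finite_P1 P1_fst P1_delta])
  then show "rr \<le> hilb rr (apo rr SF :: 'k mpol set) 1" using card_P1 by simp
qed

lemma h3: "hilb rr (apo rr SF :: 'k::field mpol set) 3 = rr"
proof (rule antisym)
  let ?T = "(\<lambda>c. sg c 1) ` mons 1 rr :: 'k mpol set"
  have "hilb rr (apo rr SF :: 'k mpol set) 3 \<le> card ?T"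
  proof (rule ap.hilb_upper)
    show "finite ?T" by (intro finite_imageI finite_monos)
    fix a assume a: "a \<in> mons 3 rr"
    show "phi SF (sg a 1) \<in> vs.span ?T"
    proof (rule ap.phi_mono_in_span)
      fix c assume ac: "a + c \<in> SF"
      have "mdeg (a + c) = 4" using ap.S4[OF ac] .
      then have "mdeg c = 1" using a by (simp add: mdeg_add mons_def)
      moreover have "ks c \<subseteq> {..<rr}" using ap.Sn[OF ac] keys_add_nat[of a c] by blast
      ultimately show "c \<in> mons 1 rr" by (simp add: mons_def)
    qed
  qed
  also have "\<dots> \<le> card (mons 1 rr)" by (intro card_image_le finite_monos)
  also have "\<dots> \<le> rr" by (rule card_mons1)
  finally show "hilb rr (apo rr SF :: 'k mpol set) 3 \<le> rr" .
  define P3 where "P3 = prod.swap ` P1"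
  have cP3: "card P3 = rr" unfolding P3_def using card_P1 by (simp add: card_image)
  have "card P3 \<le> hilb rr (apo rr SF :: 'k mpol set) 3"
  proof (rule ap.hilb_lower)
    show "finite P3" unfolding P3_def using finite_P1 by simp
    fix p assume "p \<in> P3"
    then obtain p0 where "p0 \<in> P1" "p = prod.swap p0" unfolding P3_def by blast
    then show "fst p \<in> mons 3 rr" using P1_snd by simp
  next
    fix p q assume "p \<in> P3" "q \<in> P3"
    then obtain p0 q0 where pq: "p0 \<in> P1" "p = prod.swap p0" "q0 \<in> P1" "q = prod.swap q0"
      unfolding P3_def by blast
    have "(fst p + snd q \<in> SF) = (fst q0 + snd p0 \<in> SF)" using pq by (simp add: add.commute)
    also have "\<dots> = (q0 = p0)" by (rule P1_delta[OF pq(3,1)])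
    also have "\<dots> = (p = q)" using pq by (metis swap_swap)
    finally show "(fst p + snd q \<in> SF) = (p = q)" .
  qed
  then show "rr \<le> hilb rr (apo rr SF :: 'k mpol set) 3" using cP3 by simp
qed

definition s0 where "s0 = e1 (yv (0, 0, 0)) + tmon (0, 0, 0)"

lemma s0_SF: "s0 \<in> SF"
  unfolding s0_def SF_def using diag_Tr[of 0] m1 by auto

lemma h0: "hilb rr (apo rr SF :: 'k::field mpol set) 0 = 1"
proof (rule antisym)
  have "hilb rr (apo rr SF :: 'k mpol set) 0 \<le> card {phi SF (sg 0 1) :: 'k mpol}"
  proof (rule ap.hilb_upper)
    fix a assume "a \<in> mons 0 rr"
    then have "a = 0" by (simp add: mons0)
    then show "phi SF (sg a 1) \<in> vs.span {phi SF (sg 0 1) :: 'k mpol}" by (simp add: vs.span_base)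
  qed simp
  then show "hilb rr (apo rr SF :: 'k mpol set) 0 \<le> 1" by simp
  have "card {(0 :: nat \<Rightarrow>\<^sub>0 nat, s0)} \<le> hilb rr (apo rr SF :: 'k mpol set) 0"
    by (rule ap.hilb_lower) (auto simp: mons0 s0_SF)
  then show "1 \<le> hilb rr (apo rr SF :: 'k mpol set) 0" by simp
qed

lemma h4: "hilb rr (apo rr SF :: 'k::field mpol set) 4 = 1"
proof (rule antisym)
  have "hilb rr (apo rr SF :: 'k mpol set) 4 \<le> card ((\<lambda>c. sg c 1) ` mons 0 rr :: 'k mpol set)"
  proof (rule ap.hilb_upper)
    show "finite ((\<lambda>c. sg c 1) ` mons 0 rr :: 'k mpol set)" by (intro finite_imageI finite_monos)
    fix a assume a: "a \<in> mons 4 rr"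
    show "phi SF (sg a 1) \<in> vs.span ((\<lambda>c. sg c 1) ` mons 0 rr :: 'k mpol set)"
    proof (rule ap.phi_mono_in_span)
      fix c assume ac: "a + c \<in> SF"
      have "mdeg (a + c) = 4" using ap.S4[OF ac] .
      then have "mdeg c = 0" using a by (simp add: mdeg_add mons_def)
      then show "c \<in> mons 0 rr" by (simp add: mons0 mdeg_eq_0)
    qed
  qed
  then show "hilb rr (apo rr SF :: 'k mpol set) 4 \<le> 1" by (simp add: mons0)
  have "s0 \<in> mons 4 rr" using ap.S4[OF s0_SF] ap.Sn[OF s0_SF] by (simp add: mons_def)
  then have "card {(s0, 0 :: nat \<Rightarrow>\<^sub>0 nat)} \<le> hilb rr (apo rr SF :: 'k mpol set) 4"
    by (intro ap.hilb_lower) (auto simp: s0_SF)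
  then show "1 \<le> hilb rr (apo rr SF :: 'k mpol set) 4" by simp
qed

lemma h2_aux:
  assumes a: "a \<in> mons 2 rr" and k: "k \<in> ks a" "m \<le> k" and ac: "a + c \<in> SF"
  shows "c \<in> mons 2 m"
proof -
  obtain t where t: "t \<in> Tr m" "a + c = e1 (yv t) + tmon t" using ac by (rule SF_E)
  have L: "lk (a + c) x = (if yv t = x then 1 else 0)" if "m \<le> x" for x
    using lk_sf_high[OF t(1) that] t(2) by simp
  have "mdeg (a + c) = 4" using ap.S4[OF ac] .
  then have dc: "mdeg c = 2" using a by (simp add: mdeg_add mons_def)
  have "lk a k \<ge> 1" using k(1) by (simp add: in_keys_iff)
  then have "lk (a + c) k \<ge> 1" by (simp add: lookup_add)
  then have yk: "yv t = k" and "lk (a + c) k = 1" using L[OF k(2)] by (auto split: if_splits)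
  then have ck: "lk c k = 0" using \<open>lk a k \<ge> 1\<close> by (simp add: lookup_add)
  have "ks c \<subseteq> {..<m}"
  proof
    fix k' assume k': "k' \<in> ks c"
    show "k' \<in> {..<m}"
    proof (rule ccontr)
      assume "k' \<notin> {..<m}"
      then have km: "m \<le> k'" by simp
      have "lk c k' \<ge> 1" using k' by (simp add: in_keys_iff)
      then have "lk (a + c) k' \<ge> 1" by (simp add: lookup_add)
      then have "yv t = k'" using L[OF km] by (auto split: if_splits)
      then show False using yk ck \<open>lk c k' \<ge> 1\<close> by simp
    qed
  qed
  then show ?thesis using dc by (simp add: mons_def)
qed

lemma h2: "hilb rr (apo rr SF :: 'k::field mpol set) 2 \<le> m * (m + 1)"
proof -
  let ?A = "phi SF ` (\<lambda>a. sg a 1) ` mons 2 m :: 'k mpol set"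
  let ?B = "(\<lambda>c. sg c 1) ` mons 2 m :: 'k mpol set"
  have "hilb rr (apo rr SF :: 'k mpol set) 2 \<le> card (?A \<union> ?B)"
  proof (rule ap.hilb_upper)
    show "finite (?A \<union> ?B)" by (intro finite_UnI finite_imageI finite_monos)
    fix a assume a: "a \<in> mons 2 rr"
    show "phi SF (sg a 1) \<in> vs.span (?A \<union> ?B)"
    proof (cases "ks a \<subseteq> {..<m}")
      case True
      then have "a \<in> mons 2 m" using a by (simp add: mons_def)
      then show ?thesis by (intro vs.span_base UnI1 imageI)
    next
      case False
      then obtain k where k: "k \<in> ks a" "m \<le> k" by (meson lessThan_iff not_le subsetI)
      have "phi SF (sg a 1) \<in> vs.span ?B"
        by (rule ap.phi_mono_in_span) (rule h2_aux[OF a k])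
      then show ?thesis using vs.span_mono[of ?B "?A \<union> ?B"] by blast
    qed
  qed
  moreover have "card (?A \<union> ?B) \<le> card ?A + card ?B" by (rule card_Un_le)
  moreover have "card ?A \<le> card ((\<lambda>a. sg a (1::'k)) ` mons 2 m)"
    by (intro card_image_le finite_imageI finite_monos)
  moreover have "card ((\<lambda>a. sg a (1::'k)) ` mons 2 m) \<le> card (mons 2 m)"
    by (intro card_image_le finite_monos)
  moreover have "card ?B \<le> card (mons 2 m)" by (intro card_image_le finite_monos)
  moreover have "card (mons 2 m) \<le> card (Pairs m)" by (rule card_mons2)
  moreover have "2 * card (Pairs m) = m * (m + 1)" by (rule two_card_Pairs)
  ultimately show ?thesis by linarith
qed

lemma realizable:
  "AG_hilb_realizable TYPE('k::field) rr (hilb rr (apo rr SF :: 'k mpol set) 2)"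
  unfolding AG_hilb_realizable_def
  using ap.graded[OF h4] h0 h1 h3 h4 ap.hilb_high by blast

end

theorem proposition3p4:
  fixes m :: nat
  assumes "m \<ge> 3"
  shows "delta TYPE('k::field_char_0) (m + (m + 2 choose 3)) \<ge> int (m choose 3)"
proof -
  obtain idx where bij: "bij_betw idx (Tr m) {0..<card (Tr m)}"
    using ex_bij_betw_finite_nat[OF finite_Tr] by blast
  interpret c: constr m idx
    using assms bij by unfold_locales (auto simp: atLeast0LessThan)
  have rr: "c.rr = m + (m + 2 choose 3)" by (simp add: c.rr_def card_Tr)
  let ?h = "hilb c.rr (apo c.rr c.SF :: 'k mpol set) 2"
  have "mu TYPE('k) c.rr \<le> ?h" unfolding mu_def by (rule Least_le) (rule c.realizable)
  also have "?h \<le> m * (m + 1)" by (rule c.h2)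
  finally have mu: "mu TYPE('k) c.rr \<le> m * (m + 1)" .
  have "int (m + (m + 2 choose 3)) = int (m * (m + 1)) + int (m choose 3)"
    using choose_identity[of m] by simp
  moreover have "int (mu TYPE('k) (m + (m + 2 choose 3))) \<le> int (m * (m + 1))"
  proof -
    have "mu TYPE('k) (m + (m + 2 choose 3)) \<le> m * (m + 1)" using mu rr by simp
    then show ?thesis by (simp only: of_nat_le_iff)
  qed
  ultimately show ?thesis unfolding delta_def by linarith
qed

end
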